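(* Let $m\in\mathbb{N}$, let $\lambda_1<\lambda_2<\dots<\lambda_m$ be real numbers and $\Lambda=\operatorname{diag}(\lambda_1,\dots,\lambda_m)$. Let $G$ be a connected graph with vertex set $[m]=\{1,\dots,m\}$, let $f:E(G)\to\mathbb{N}$ be any function, and for $t\in\mathbb{R}$ let $$\mathcal M_{f,G}(t):=\{A=(a(i,j))\in S(G): a(i,j)=t^{f(\{i,j\})}\text{ for all }\{i,j\}\in E(G)\}.$$ Then for every $\epsilon>0$ there exist $t_0>0$ and a matrix $A\in\mathcal M_{f,G}(t_0)\cap\mathcal E_\Lambda$ such that $A$ has the strong spectral property and $\|A-\Lambda\|<\epsilon$.
   Context: For a simple graph $G$ on vertex set $[n]$, $S(G)$ is the set of real symmetric $n\times n$ matrices $A=(a(i,j))$ such that for $i\neq j$, $a(i,j)\neq 0$ if and only if $\{i,j\}\in E(G)$; diagonal entries are unrestricted. $\mathcal E_\Lambda$ denotes the set (smooth manifold) of all real symmetric $m\times m$ matrices whose eigenvalues are $\lambda_1,\dots,\lambda_m$. A symmetric $n\times n$ matrix $A$ has the strong spectral property (SSP) if the only real symmetric matrix $X$ with $AX=XA$, $A\circ X=0$ and $I_n\circ X=0$ is $X=0$, where $\circ$ is the entrywise (Hadamard) product. $\|\cdot\|$ is any matrix norm. *)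

theory Defs
  imports "Jordan_Normal_Form.Char_Poly"
begin

(* A simple graph on vertex set {0..<m} (0-indexed version of [m]) given by its edge set:
   a set of 2-element subsets of {0..<m}. *)
definition simple_graph :: "nat \<Rightarrow> nat set set \<Rightarrow> bool" where
  "simple_graph m E \<longleftrightarrow> E \<subseteq> {e. \<exists>i j. i < m \<and> j < m \<and> i \<noteq> j \<and> e = {i, j}}"

definition connected_graph :: "nat \<Rightarrow> nat set set \<Rightarrow> bool" where
  "connected_graph m E \<longleftrightarrow>
     (\<forall>i<m. \<forall>j<m. (i, j) \<in> {(u, v). {u, v} \<in> E}\<^sup>*)"

definition real_symmetric :: "real mat \<Rightarrow> bool" where
  "real_symmetric A \<longleftrightarrow> A\<^sup>T = A"

definition S_graph :: "nat \<Rightarrow> nat set set \<Rightarrow> real mat set" where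
  "S_graph m E = {A. A \<in> carrier_mat m m \<and> real_symmetric A \<and>
      (\<forall>i<m. \<forall>j<m. i \<noteq> j \<longrightarrow> (A $$ (i, j) \<noteq> 0 \<longleftrightarrow> {i, j} \<in> E))}"

definition M_fG :: "nat \<Rightarrow> nat set set \<Rightarrow> (nat set \<Rightarrow> nat) \<Rightarrow> real \<Rightarrow> real mat set" where
  "M_fG m E f t = {A \<in> S_graph m E.
      \<forall>i<m. \<forall>j<m. {i, j} \<in> E \<longrightarrow> A $$ (i, j) = t ^ f {i, j}}"

definition diag_of :: "nat \<Rightarrow> (nat \<Rightarrow> real) \<Rightarrow> real mat" where
  "diag_of m lam = mat m m (\<lambda>(i, j). if i = j then lam i else 0)"

(* E_Lambda: real symmetric m x m matrices whose eigenvalues (with multiplicity) are lam 0..lam (m-1),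
   i.e. whose characteristic polynomial is prod_i (x - lam i) *)
definition E_Lambda :: "nat \<Rightarrow> (nat \<Rightarrow> real) \<Rightarrow> real mat set" where
  "E_Lambda m lam = {A. A \<in> carrier_mat m m \<and> real_symmetric A \<and>
      char_poly A = (\<Prod>i<m. [:- lam i, 1:])}"

definition SSP :: "real mat \<Rightarrow> bool" where
  "SSP A \<longleftrightarrow> (\<forall>X. X \<in> carrier_mat (dim_row A) (dim_row A) \<and> real_symmetric X \<and>
      A * X = X * A \<and>
      (\<forall>i<dim_row A. \<forall>j<dim_row A. A $$ (i, j) * X $$ (i, j) = 0) \<and>
      (\<forall>i<dim_row A. X $$ (i, i) = 0) \<longrightarrow> X = 0\<^sub>m (dim_row A) (dim_row A))"

(* Frobenius norm (all matrix norms are equivalent in finite dimension) *)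
definition frob_norm :: "real mat \<Rightarrow> real" where
  "frob_norm A = sqrt (\<Sum>i<dim_row A. \<Sum>j<dim_col A. (A $$ (i, j))\<^sup>2)"

end

theory Submission
  imports Defs "HOL-Analysis.Brouwer_Fixpoint"
begin



lemma monic_roots_eq:
  fixes p :: "real poly"
  assumes dp: "degree p = m" and cp: "coeff p m = 1" and inj: "inj_on lam {..<m}"
    and roots: "\<And>k. k < m \<Longrightarrow> poly p (lam k) = 0"
  shows "p = (\<Prod>i<m. [:- lam i, 1:])"
proof (rule ccontr)
  define Q where "Q = (\<Prod>i<m. [:- lam i, 1:])"
  have "degree (\<Prod>i=0..<m. [:- lam i, 1:]) = m \<and> coeff (\<Prod>i=0..<m. [:- lam i, 1:]) m = 1"
    by (rule degree_prod_monic) auto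
  then have dQ: "degree Q = m" and cQ: "coeff Q m = 1"
    unfolding Q_def by (auto simp: lessThan_atLeast0)
  assume ne: "p \<noteq> (\<Prod>i<m. [:- lam i, 1:])"
  define D where "D = p - Q"
  have D0: "D \<noteq> 0" using ne unfolding D_def Q_def by auto
  have dD: "degree D \<le> m" unfolding D_def using degree_diff_le[of p m Q] dp dQ by auto
  have cD: "coeff D m = 0" unfolding D_def using cp cQ by simp
  have "degree D \<noteq> m" using cD D0 leading_coeff_0_iff by metis
  with dD have dlt: "degree D < m" by simp
  have "lam ` {..<m} \<subseteq> {x. poly D x = 0}"
    using roots unfolding D_def Q_def by (auto simp: poly_prod)
  moreover have "finite {x. poly D x = 0}" using poly_roots_finite[OF D0] .
  ultimately have "card (lam ` {..<m}) \<le> card {x. poly D x = 0}" by (rule card_mono[rotated])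
  also have "\<dots> \<le> degree D" by (rule card_poly_roots_bound[OF D0])
  finally have "m \<le> degree D" using card_image[OF inj] by simp
  with dlt show False by simp
qed

lemma bw_multi:
  fixes X :: "nat \<Rightarrow> nat \<Rightarrow> real"
  assumes "\<And>k j. j < n \<Longrightarrow> \<bar>X k j\<bar> \<le> B"
  shows "\<exists>\<sigma> L. strict_mono \<sigma> \<and> (\<forall>j<n. (\<lambda>k. X (\<sigma> k) j) \<longlonglongrightarrow> L j)"
  using assms
proof (induction n)
  case 0
  then show ?case by (auto intro!: exI[of _ id] simp: strict_mono_def)
next
  case (Suc n)
  then obtain \<sigma> L where s: "strict_mono \<sigma>" and L: "\<forall>j<n. (\<lambda>k. X (\<sigma> k) j) \<longlonglongrightarrow> L j"
    by auto
  have "bounded (range (\<lambda>k. X (\<sigma> k) n))"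
    unfolding bounded_real using Suc.prems[of n] by auto
  then obtain l r where r: "strict_mono r" and lr: "((\<lambda>k. X (\<sigma> k) n) \<circ> r) \<longlonglongrightarrow> l"
    using bounded_imp_convergent_subsequence by blast
  show ?case
  proof (intro exI conjI allI impI)
    show "strict_mono (\<sigma> \<circ> r)" using s r by (simp add: strict_mono_def)
    fix j assume j: "j < Suc n"
    show "(\<lambda>k. X ((\<sigma> \<circ> r) k) j) \<longlonglongrightarrow> (L(n := l)) j"
    proof (cases "j = n")
      case True
      then show ?thesis using lr by (simp add: comp_def)
    next
      case False
      then have "j < n" using j by simp
      then have "((\<lambda>k. X (\<sigma> k) j) \<circ> r) \<longlonglongrightarrow> L j"
        using L LIMSEQ_subseq_LIMSEQ r by blast
      then show ?thesis using False by (simp add: comp_def)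
    qed
  qed
qed

lemma poincare_miranda:
  fixes h :: "nat \<Rightarrow> (nat \<Rightarrow> real) \<Rightarrow> real" and n :: nat
  assumes cont: "\<And>i X L. i < n \<Longrightarrow> (\<And>j. j < n \<Longrightarrow> (\<lambda>k. X k j) \<longlonglongrightarrow> L j) \<Longrightarrow> (\<lambda>k. h i (X k)) \<longlonglongrightarrow> h i L"
    and f0: "\<And>i x. i < n \<Longrightarrow> (\<And>j. j < n \<Longrightarrow> 0 \<le> x j \<and> x j \<le> 1) \<Longrightarrow> x i = 0 \<Longrightarrow> h i x > 0"
    and f1: "\<And>i x. i < n \<Longrightarrow> (\<And>j. j < n \<Longrightarrow> 0 \<le> x j \<and> x j \<le> 1) \<Longrightarrow> x i = 1 \<Longrightarrow> h i x < 0"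
  shows "\<exists>x. (\<forall>j<n. 0 \<le> x j \<and> x j \<le> 1) \<and> (\<forall>i<n. h i x = 0)"
proof -
  define pt :: "nat \<Rightarrow> (nat \<Rightarrow> nat) \<Rightarrow> nat \<Rightarrow> real" where "pt p x = (\<lambda>j. real (x j) / real p)" for p x
  define lab :: "nat \<Rightarrow> (nat \<Rightarrow> nat) \<Rightarrow> nat \<Rightarrow> nat"
    where "lab p x i = (if h i (pt p x) > 0 then 0 else 1)" for p x i
  define cell where "cell q u \<longleftrightarrow> (\<forall>j<n. q j \<le> u j \<and> u j \<le> q j + 1)" for q u :: "nat \<Rightarrow> nat"
  have step: "\<exists>q. (\<forall>i<n. q i < Suc k) \<and> (\<forall>i<n. \<exists>u v. cell q u \<and> cell q v \<and>
      h i (pt (Suc k) u) > 0 \<and> h i (pt (Suc k) v) \<le> 0)" for k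
  proof -
    let ?p = "Suc k"
    have incube: "0 \<le> pt ?p x j \<and> pt ?p x j \<le> 1" if "\<forall>i<n. x i \<le> ?p" "j < n" for x j
      using that by (auto simp: pt_def field_simps)
    obtain q where q1: "\<forall>i<n. q i < ?p"
      and q2: "\<forall>i<n. \<exists>r s. (\<forall>j<n. q j \<le> r j \<and> r j \<le> q j + 1) \<and> (\<forall>j<n. q j \<le> s j \<and> s j \<le> q j + 1) \<and> lab ?p r i \<noteq> lab ?p s i"
    proof (rule kuhn_lemma[of ?p n "lab ?p"])
      show "0 < ?p" by simp
      show "\<forall>x. (\<forall>i<n. x i \<le> ?p) \<longrightarrow> (\<forall>i<n. lab ?p x i = 0 \<or> lab ?p x i = 1)"
        by (auto simp: lab_def)
      show "\<forall>x. (\<forall>i<n. x i \<le> ?p) \<longrightarrow> (\<forall>i<n. x i = 0 \<longrightarrow> lab ?p x i = 0)"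
      proof (intro allI impI)
        fix x i assume x: "\<forall>i<n. x i \<le> ?p" and i: "i < n" and xi: "x i = 0"
        have "h i (pt ?p x) > 0" using f0[OF i] incube[OF x] xi by (simp add: pt_def)
        then show "lab ?p x i = 0" by (simp add: lab_def)
      qed
      show "\<forall>x. (\<forall>i<n. x i \<le> ?p) \<longrightarrow> (\<forall>i<n. x i = ?p \<longrightarrow> lab ?p x i = 1)"
      proof (intro allI impI)
        fix x i assume x: "\<forall>i<n. x i \<le> ?p" and i: "i < n" and xi: "x i = ?p"
        have "h i (pt ?p x) < 0" using f1[OF i] incube[OF x] xi by (simp add: pt_def)
        then show "lab ?p x i = 1" by (simp add: lab_def)
      qed
    qed blast
    have "\<forall>i<n. \<exists>u v. cell q u \<and> cell q v \<and> h i (pt ?p u) > 0 \<and> h i (pt ?p v) \<le> 0"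
    proof (intro allI impI)
      fix i assume i: "i < n"
      then obtain r s where r: "cell q r" and s: "cell q s" and d: "lab ?p r i \<noteq> lab ?p s i"
        using q2 unfolding cell_def by blast
      show "\<exists>u v. cell q u \<and> cell q v \<and> h i (pt ?p u) > 0 \<and> h i (pt ?p v) \<le> 0"
      proof (cases "h i (pt ?p r) > 0")
        case True
        then have "\<not> h i (pt ?p s) > 0" using d by (auto simp: lab_def)
        then show ?thesis using True r s by (intro exI[of _ r] exI[of _ s]) auto
      next
        case False
        then have "h i (pt ?p s) > 0" using d by (auto simp: lab_def split: if_splits)
        then show ?thesis using False r s by (intro exI[of _ s] exI[of _ r]) auto
      qed
    qed
    then show ?thesis using q1 by blast
  qed
  then obtain Q where Q: "\<And>k. (\<forall>i<n. Q k i < Suc k) \<and> (\<forall>i<n. \<exists>u v. cell (Q k) u \<and> cell (Q k) v \<and>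
      h i (pt (Suc k) u) > 0 \<and> h i (pt (Suc k) v) \<le> 0)"
    by metis
  have "\<forall>k i. \<exists>w. i < n \<longrightarrow> cell (Q k) (fst w) \<and> cell (Q k) (snd w) \<and>
      h i (pt (Suc k) (fst w)) > 0 \<and> h i (pt (Suc k) (snd w)) \<le> 0"
    using Q by fastforce
  then obtain W where W: "\<And>k i. i < n \<Longrightarrow> cell (Q k) (fst (W k i)) \<and> cell (Q k) (snd (W k i)) \<and>
      h i (pt (Suc k) (fst (W k i))) > 0 \<and> h i (pt (Suc k) (snd (W k i))) \<le> 0"
    by metis
  define Y where "Y k j = pt (Suc k) (Q k) j" for k j
  have Ycube: "0 \<le> Y k j \<and> Y k j \<le> 1" if "j < n" for k j
    using Q[of k] that by (auto simp: Y_def pt_def field_simps less_imp_le)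
  have "\<And>k j. j < n \<Longrightarrow> \<bar>Y k j\<bar> \<le> 1" using Ycube by fastforce
  from bw_multi[of n Y, OF this] obtain \<sigma> L where \<sigma>: "strict_mono \<sigma>"
    and L: "\<And>j. j < n \<Longrightarrow> (\<lambda>k. Y (\<sigma> k) j) \<longlonglongrightarrow> L j" by blast
  have inv0: "(\<lambda>k. 1 / real (Suc (\<sigma> k))) \<longlonglongrightarrow> 0"
  proof -
    have "(\<lambda>k. inverse (real (Suc k))) \<longlonglongrightarrow> 0" by (rule LIMSEQ_inverse_real_of_nat)
    then have "((\<lambda>k. inverse (real (Suc k))) \<circ> \<sigma>) \<longlonglongrightarrow> 0"
      using LIMSEQ_subseq_LIMSEQ \<sigma> by blast
    then show ?thesis by (simp add: comp_def divide_inverse)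
  qed
  have near: "(\<lambda>k. pt (Suc (\<sigma> k)) (U k) j) \<longlonglongrightarrow> L j"
    if j: "j < n" and U: "\<And>k. cell (Q (\<sigma> k)) (U k)" for U j
  proof -
    define e where "e k = pt (Suc (\<sigma> k)) (U k) j - Y (\<sigma> k) j" for k
    have e: "0 \<le> e k \<and> e k \<le> 1 / real (Suc (\<sigma> k))" for k
    proof -
      have "Q (\<sigma> k) j \<le> U k j \<and> U k j \<le> Q (\<sigma> k) j + 1" using U[of k] j by (auto simp: cell_def)
      then have "real (Q (\<sigma> k) j) \<le> real (U k j) \<and> real (U k j) \<le> real (Q (\<sigma> k) j) + 1" by simp
      then have a: "0 \<le> real (U k j) - real (Q (\<sigma> k) j)" "real (U k j) - real (Q (\<sigma> k) j) \<le> 1" by auto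
      have eq: "e k = (real (U k j) - real (Q (\<sigma> k) j)) / real (Suc (\<sigma> k))"
        unfolding e_def Y_def pt_def by (simp add: diff_divide_distrib)
      show ?thesis unfolding eq using a by (auto intro: divide_right_mono)
    qed
    have "e \<longlonglongrightarrow> 0"
    proof (rule tendsto_sandwich[of "\<lambda>k. 0" _ _ "\<lambda>k. 1 / real (Suc (\<sigma> k))"])
      show "\<forall>\<^sub>F k in sequentially. 0 \<le> e k" using e by simp
      show "\<forall>\<^sub>F k in sequentially. e k \<le> 1 / real (Suc (\<sigma> k))" using e by simp
    qed (use inv0 in auto)
    then have "(\<lambda>k. Y (\<sigma> k) j + e k) \<longlonglongrightarrow> L j + 0" by (intro tendsto_add L j)
    then show ?thesis by (simp add: e_def)
  qed
  show ?thesis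
  proof (intro exI conjI allI impI)
    fix j assume j: "j < n"
    show "0 \<le> L j" using L[OF j] Ycube[OF j] by (intro LIMSEQ_le_const[of _ "L j"]) auto
    show "L j \<le> 1" using L[OF j] Ycube[OF j] by (intro LIMSEQ_le_const2[of _ "L j"]) auto
  next
    fix i assume i: "i < n"
    have c1: "(\<lambda>k. h i (pt (Suc (\<sigma> k)) (fst (W (\<sigma> k) i)))) \<longlonglongrightarrow> h i L"
      by (rule cont[OF i]) (rule near, assumption, use W[OF i] in blast)
    have c2: "(\<lambda>k. h i (pt (Suc (\<sigma> k)) (snd (W (\<sigma> k) i)))) \<longlonglongrightarrow> h i L"
      by (rule cont[OF i]) (rule near, assumption, use W[OF i] in blast)
    have "0 \<le> h i L" using c1 W[OF i] by (intro LIMSEQ_le_const[of _ "h i L"]) (auto intro: less_imp_le)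
    moreover have "h i L \<le> 0" using c2 W[OF i] by (intro LIMSEQ_le_const2[of _ "h i L"]) auto
    ultimately show "h i L = 0" by simp
  qed
qed



lemma prod_diff_bound:
  fixes a b :: "nat \<Rightarrow> real"
  assumes fin: "finite S" and B1: "1 \<le> B"
    and ab: "\<And>i. i \<in> S \<Longrightarrow> \<bar>a i\<bar> \<le> B \<and> \<bar>b i\<bar> \<le> B \<and> \<bar>a i - b i\<bar> \<le> \<eta>"
  shows "\<bar>(\<Prod>i\<in>S. a i) - (\<Prod>i\<in>S. b i)\<bar> \<le> real (card S) * B ^ card S * \<eta>"
  using fin ab
proof (induction S rule: finite_induct)
  case empty
  then show ?case by simp
next
  case (insert x F)
  have hx: "\<bar>a x\<bar> \<le> B" "\<bar>b x\<bar> \<le> B" "\<bar>a x - b x\<bar> \<le> \<eta>" using insert.prems by auto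
  have IH: "\<bar>(\<Prod>i\<in>F. a i) - (\<Prod>i\<in>F. b i)\<bar> \<le> real (card F) * B ^ card F * \<eta>"
    using insert by auto
  have pb: "\<bar>\<Prod>i\<in>F. b i\<bar> \<le> B ^ card F"
    unfolding abs_prod
    using insert.prems B1 by (intro prod_le_power) auto
  have eta0: "0 \<le> \<eta>" using hx(3) by linarith
  have Bp: "B ^ card F \<le> B ^ Suc (card F)" using B1 by (simp add: power_increasing)
  have "(\<Prod>i\<in>insert x F. a i) - (\<Prod>i\<in>insert x F. b i)
      = a x * ((\<Prod>i\<in>F. a i) - (\<Prod>i\<in>F. b i)) + (a x - b x) * (\<Prod>i\<in>F. b i)"
    using insert.hyps by (simp add: algebra_simps)
  then have "\<bar>(\<Prod>i\<in>insert x F. a i) - (\<Prod>i\<in>insert x F. b i)\<bar>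
      \<le> \<bar>a x\<bar> * \<bar>(\<Prod>i\<in>F. a i) - (\<Prod>i\<in>F. b i)\<bar> + \<bar>a x - b x\<bar> * \<bar>\<Prod>i\<in>F. b i\<bar>"
    by (simp add: abs_mult[symmetric] abs_triangle_ineq)
  also have "\<dots> \<le> B * (real (card F) * B ^ card F * \<eta>) + \<eta> * B ^ card F"
    by (intro add_mono mult_mono hx IH pb) (use B1 eta0 in auto)
  also have "\<dots> \<le> B * (real (card F) * B ^ card F * \<eta>) + \<eta> * B ^ Suc (card F)"
    by (intro add_mono mult_left_mono Bp eta0) (use B1 in auto)
  also have "\<dots> = real (card (insert x F)) * B ^ card (insert x F) * \<eta>"
    using insert.hyps by (simp add: algebra_simps)
  finally show ?case .
qed

lemma det_diff_bound:
  fixes M P :: "real mat"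
  assumes M: "M \<in> carrier_mat m m" and P: "P \<in> carrier_mat m m" and B1: "1 \<le> B"
    and bM: "\<And>i j. i < m \<Longrightarrow> j < m \<Longrightarrow> \<bar>M $$ (i,j)\<bar> \<le> B"
    and bMP: "\<And>i j. i < m \<Longrightarrow> j < m \<Longrightarrow> \<bar>M $$ (i,j) + P $$ (i,j)\<bar> \<le> B"
    and bP: "\<And>i j. i < m \<Longrightarrow> j < m \<Longrightarrow> \<bar>P $$ (i,j)\<bar> \<le> \<eta>"
  shows "\<bar>det (M + P) - det M\<bar> \<le> fact m * (real m * B ^ m * \<eta>)"
proof -
  let ?Perm = "{p. p permutes {0..<m}}"
  have MP: "M + P \<in> carrier_mat m m" using M P by simp
  have eq: "det (M + P) - det M = (\<Sum>p\<in>?Perm. signof p * ((\<Prod>i=0..<m. (M+P) $$ (i, p i)) - (\<Prod>i=0..<m. M $$ (i, p i))))"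
    unfolding det_def'[OF MP] det_def'[OF M] sum_subtractf[symmetric]
    by (rule sum.cong[OF refl]) (simp only: right_diff_distrib)
  have "\<bar>det (M + P) - det M\<bar> \<le> (\<Sum>p\<in>?Perm. \<bar>signof p * ((\<Prod>i=0..<m. (M+P) $$ (i, p i)) - (\<Prod>i=0..<m. M $$ (i, p i)))\<bar>)"
    unfolding eq by (rule sum_abs)
  also have "\<dots> \<le> (\<Sum>p\<in>?Perm. real m * B ^ m * \<eta>)"
  proof (rule sum_mono)
    fix p assume p: "p \<in> ?Perm"
    have pi: "p i < m" if "i < m" for i using p that permutes_in_image[of p "{0..<m}" i] by simp
    have s: "\<bar>signof p :: real\<bar> = 1" by (simp add: sign_def)
    have ent: "\<bar>(M+P) $$ (i, p i)\<bar> \<le> B \<and> \<bar>M $$ (i, p i)\<bar> \<le> B \<and> \<bar>(M+P) $$ (i, p i) - M $$ (i, p i)\<bar> \<le> \<eta>"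
      if i: "i \<in> {0..<m}" for i
    proof -
      have i': "i < m" and pi': "p i < m" using i pi by auto
      have e: "(M+P) $$ (i, p i) = M $$ (i, p i) + P $$ (i, p i)"
        using M P i' pi' by simp
      show ?thesis unfolding e using bM[OF i' pi'] bMP[OF i' pi'] bP[OF i' pi'] by simp
    qed
    have "\<bar>(\<Prod>i=0..<m. (M+P) $$ (i, p i)) - (\<Prod>i=0..<m. M $$ (i, p i))\<bar> \<le> real (card {0..<m}) * B ^ card {0..<m} * \<eta>"
      by (rule prod_diff_bound[OF _ B1 ent]) simp_all
    then show "\<bar>signof p * ((\<Prod>i=0..<m. (M+P) $$ (i, p i)) - (\<Prod>i=0..<m. M $$ (i, p i)))\<bar> \<le> real m * B ^ m * \<eta>"
      by (simp add: abs_mult s)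
  qed
  also have "\<dots> = fact m * (real m * B ^ m * \<eta>)"
    using card_permutations[of "{0..<m}" m] by simp
  finally show ?thesis .
qed
lemma det_diag_mat:
  fixes c :: "nat \<Rightarrow> real"
  shows "det (Matrix.mat m m (\<lambda>(i,j). if i = j then c i else 0)) = (\<Prod>i<m. c i)"
proof -
  have "det (Matrix.mat m m (\<lambda>(i,j). if i = j then c i else 0)) = prod_list (diag_mat (Matrix.mat m m (\<lambda>(i,j). if i = j then c i else 0)))"
    by (rule det_upper_triangular[of _ m]) (auto simp: upper_triangular_def)
  also have "\<dots> = prod_list (map c [0..<m])" unfolding diag_mat_def
    by (intro arg_cong[where f=prod_list] map_cong) auto
  also have "\<dots> = prod c (set [0..<m])" by (rule prod.distinct_set_conv_list[symmetric]) simp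
  also have "\<dots> = (\<Prod>i<m. c i)" by (simp add: atLeast0LessThan)
  finally show ?thesis .
qed

lemma det_tendsto:
  fixes F :: "nat \<Rightarrow> nat \<Rightarrow> nat \<Rightarrow> real"
  assumes "\<And>i j. i < m \<Longrightarrow> j < m \<Longrightarrow> (\<lambda>k. F k i j) \<longlonglongrightarrow> G i j"
  shows "(\<lambda>k. det (Matrix.mat m m (\<lambda>(i,j). F k i j))) \<longlonglongrightarrow> det (Matrix.mat m m (\<lambda>(i,j). G i j))"
proof -
  let ?Perm = "{p. p permutes {0..<m}}"
  have e: "det (Matrix.mat m m (\<lambda>(i,j). H i j)) = (\<Sum>p\<in>?Perm. signof p * (\<Prod>i=0..<m. H i (p i)))" for H :: "nat \<Rightarrow> nat \<Rightarrow> real"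
  proof -
    have "det (Matrix.mat m m (\<lambda>(i,j). H i j)) = (\<Sum>p\<in>?Perm. signof p * (\<Prod>i=0..<m. Matrix.mat m m (\<lambda>(i,j). H i j) $$ (i, p i)))"
      by (rule det_def') simp
    also have "\<dots> = (\<Sum>p\<in>?Perm. signof p * (\<Prod>i=0..<m. H i (p i)))"
    proof (rule sum.cong[OF refl])
      fix p assume p: "p \<in> ?Perm"
      have pi: "p i < m" if "i < m" for i using p that permutes_in_image[of p "{0..<m}" i] by auto
      show "signof p * (\<Prod>i=0..<m. Matrix.mat m m (\<lambda>(i,j). H i j) $$ (i, p i)) = signof p * (\<Prod>i=0..<m. H i (p i))"
        by (intro arg_cong[where f="\<lambda>x. signof p * x"] prod.cong) (auto simp: pi)
    qed
    finally show ?thesis .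
  qed
  show ?thesis unfolding e
  proof (intro tendsto_sum tendsto_mult tendsto_const tendsto_prod)
    fix p i assume "p \<in> ?Perm" "i \<in> {0..<m}"
    then show "(\<lambda>k. F k i (p i)) \<longlonglongrightarrow> G i (p i)"
      using assms permutes_in_image[of p "{0..<m}" i] by auto
  qed
qed



definition Nm :: "nat set set \<Rightarrow> (nat set \<Rightarrow> nat) \<Rightarrow> real \<Rightarrow> nat \<Rightarrow> nat \<Rightarrow> real" where
  "Nm E f t i j = (if i \<noteq> j \<and> {i, j} \<in> E then t ^ f {i, j} else 0)"

definition Am :: "nat \<Rightarrow> nat set set \<Rightarrow> (nat set \<Rightarrow> nat) \<Rightarrow> real \<Rightarrow> (nat \<Rightarrow> real) \<Rightarrow> real mat" where
  "Am m E f t d = Matrix.mat m m (\<lambda>(i, j). if i = j then d i else Nm E f t i j)"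

lemma Nm_sym: "Nm E f t i j = Nm E f t j i"
  unfolding Nm_def by (auto simp: insert_commute)

lemma Nm_diag[simp]: "Nm E f t i i = 0"
  unfolding Nm_def by simp

lemma Nm_bound:
  assumes "0 < t" "t \<le> 1" "\<And>e. e \<in> E \<Longrightarrow> f e \<ge> 1"
  shows "0 \<le> Nm E f t i j \<and> Nm E f t i j \<le> t"
proof (cases "i \<noteq> j \<and> {i, j} \<in> E")
  case True
  then have "f {i,j} \<ge> 1" using assms(3) by blast
  then have "t ^ f {i,j} \<le> t ^ 1" using assms by (intro power_decreasing) auto
  then show ?thesis using True assms by (simp add: Nm_def)
qed (use assms in \<open>auto simp: Nm_def\<close>)

lemma Am_carrier[simp]: "Am m E f t d \<in> carrier_mat m m"
  unfolding Am_def by simp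

lemma Am_index: "i < m \<Longrightarrow> j < m \<Longrightarrow> Am m E f t d $$ (i, j) = (if i = j then d i else Nm E f t i j)"
  unfolding Am_def by simp

lemma char_poly_Am:
  "poly (char_poly (Am m E f t d)) x =
     det (Matrix.mat m m (\<lambda>(i, j). if i = j then x - d i else - Nm E f t i j))"
proof -
  have "poly (char_poly (Am m E f t d)) x = det (- char_matrix (Am m E f t d) x)"
    by (rule char_poly_matrix[OF Am_carrier])
  also have "- char_matrix (Am m E f t d) x = Matrix.mat m m (\<lambda>(i, j). if i = j then x - d i else - Nm E f t i j)"
    by (rule eq_matI) (auto simp: char_matrix_def Am_def)
  finally show ?thesis .
qed

lemma det_perturb:
  fixes c :: "nat \<Rightarrow> real"
  assumes B1: "1 \<le> B" and cB: "\<And>a. a < m \<Longrightarrow> \<bar>c a\<bar> \<le> B" and tB: "t \<le> B"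
    and N: "\<And>i j. 0 \<le> Nm E f t i j \<and> Nm E f t i j \<le> t"
  shows "\<bar>det (Matrix.mat m m (\<lambda>(i, j). if i = j then c i else - Nm E f t i j)) - (\<Prod>a<m. c a)\<bar>
     \<le> fact m * (real m * B ^ m * t)"
proof -
  define M where "M = Matrix.mat m m (\<lambda>(i, j). if i = j then c i else (0::real))"
  define P where "P = Matrix.mat m m (\<lambda>(i, j). if i = j then 0 else - Nm E f t i j)"
  have eq: "Matrix.mat m m (\<lambda>(i, j). if i = j then c i else - Nm E f t i j) = M + P"
    by (rule eq_matI) (auto simp: M_def P_def)
  have dM: "det M = (\<Prod>a<m. c a)" unfolding M_def by (rule det_diag_mat)
  have "\<bar>det (M + P) - det M\<bar> \<le> fact m * (real m * B ^ m * t)"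
  proof (rule det_diff_bound)
    show "M \<in> carrier_mat m m" "P \<in> carrier_mat m m" "1 \<le> B" by (auto simp: M_def P_def B1)
    fix i j assume ij: "i < m" "j < m"
    show "\<bar>M $$ (i, j)\<bar> \<le> B" using ij cB B1 by (auto simp: M_def)
    show "\<bar>M $$ (i, j) + P $$ (i, j)\<bar> \<le> B" using ij cB N[of i j] tB by (auto simp: M_def P_def)
    show "\<bar>P $$ (i, j)\<bar> \<le> t" using ij N[of i j] by (auto simp: P_def)
  qed
  then show ?thesis unfolding eq dM .
qed


lemma face_prod_bound:
  fixes lam dd :: "nat \<Rightarrow> real"
  assumes i: "i < m" and gap: "\<And>a b. a < m \<Longrightarrow> b < m \<Longrightarrow> a \<noteq> b \<Longrightarrow> \<delta> \<le> \<bar>lam a - lam b\<bar>"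
    and dd: "\<And>a. a < m \<Longrightarrow> \<bar>dd a - lam a\<bar> \<le> \<delta> / 2" and \<delta>: "0 < \<delta>"
  shows "\<bar>\<Prod>a\<in>{..<m} - {i}. (lam i - lam a)\<bar> * (\<delta> / 2) ^ (m - 1)
      \<le> (\<Prod>a\<in>{..<m} - {i}. (lam i - lam a)) * (\<Prod>a\<in>{..<m} - {i}. (lam i - dd a))"
proof -
  have "\<bar>\<Prod>a\<in>{..<m} - {i}. (lam i - lam a)\<bar> * (\<delta> / 2) ^ (m - 1)
      = (\<Prod>a\<in>{..<m} - {i}. \<bar>lam i - lam a\<bar> * (\<delta> / 2))"
  proof -
    have c: "card ({..<m} - {i}) = m - 1" using i by simp
    have "\<bar>\<Prod>a\<in>{..<m} - {i}. (lam i - lam a)\<bar> * (\<delta> / 2) ^ (m - 1)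
       = (\<Prod>a\<in>{..<m} - {i}. \<bar>lam i - lam a\<bar>) * (\<Prod>a\<in>{..<m} - {i}. \<delta> / 2)"
      by (simp only: abs_prod prod_constant c)
    also have "\<dots> = (\<Prod>a\<in>{..<m} - {i}. \<bar>lam i - lam a\<bar> * (\<delta> / 2))"
      by (rule prod.distrib[symmetric])
    finally show ?thesis .
  qed
  also have "\<dots> \<le> (\<Prod>a\<in>{..<m} - {i}. (lam i - lam a) * (lam i - dd a))"
  proof (rule prod_mono)
    fix a assume a: "a \<in> {..<m} - {i}"
    then have g: "\<delta> \<le> \<bar>lam i - lam a\<bar>" using gap[of i a] i by auto
    have da: "\<bar>dd a - lam a\<bar> \<le> \<delta> / 2" using dd a by auto
    then have da1: "dd a - lam a \<le> \<delta> / 2" and da2: "lam a - dd a \<le> \<delta> / 2" by linarith+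
    show "0 \<le> \<bar>lam i - lam a\<bar> * (\<delta> / 2) \<and> \<bar>lam i - lam a\<bar> * (\<delta> / 2) \<le> (lam i - lam a) * (lam i - dd a)"
    proof (cases "lam i - lam a \<ge> 0")
      case True
      then have "\<delta> \<le> lam i - lam a" using g by simp
      then have "\<delta> / 2 \<le> lam i - dd a" using da1 da2 by linarith
      then have "(lam i - lam a) * (\<delta> / 2) \<le> (lam i - lam a) * (lam i - dd a)"
        using True by (rule mult_left_mono)
      then show ?thesis using True \<delta> by simp
    next
      case False
      then have "\<delta> \<le> lam a - lam i" using g by simp
      then have "\<delta> / 2 \<le> dd a - lam i" using da1 da2 by linarith
      then have "\<bar>lam i - lam a\<bar> * (\<delta> / 2) \<le> \<bar>lam i - lam a\<bar> * (dd a - lam i)"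
        by (rule mult_left_mono) simp
      also have "\<dots> = (lam i - lam a) * (lam i - dd a)" using False by (simp add: algebra_simps)
      finally show ?thesis using \<delta> by simp
    qed
  qed
  also have "\<dots> = (\<Prod>a\<in>{..<m} - {i}. (lam i - lam a)) * (\<Prod>a\<in>{..<m} - {i}. (lam i - dd a))"
    by (simp add: prod.distrib)
  finally show ?thesis .
qed


theorem lemma2p1:
  fixes m :: nat and lam :: "nat \<Rightarrow> real" and E :: "nat set set"
    and f :: "nat set \<Rightarrow> nat" and \<epsilon> :: real
  assumes incr: "\<And>i j. i < j \<Longrightarrow> j < m \<Longrightarrow> lam i < lam j"
    and graph: "simple_graph m E"
    and conn: "connected_graph m E"
    and fpos: "\<And>e. e \<in> E \<Longrightarrow> f e \<ge> 1"
    and eps: "\<epsilon> > 0"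
  shows "\<exists>t0 > 0. \<exists>A. A \<in> M_fG m E f t0 \<and> A \<in> E_Lambda m lam \<and> SSP A \<and>
           frob_norm (A - diag_of m lam) < \<epsilon>"
proof -
  have neq: "lam a \<noteq> lam b" if "a < m" "b < m" "a \<noteq> b" for a b
    using incr[of a b] incr[of b a] that by (cases "a < b") auto
  define D where "D = (\<lambda>(i,j). \<bar>lam i - lam j\<bar>) ` {(i,j). i < m \<and> j < m \<and> i \<noteq> j}"
  have finD: "finite D"
  proof -
    have "{(i,j). i < m \<and> j < m \<and> i \<noteq> j} \<subseteq> {..<m} \<times> {..<m}" by auto
    then have "finite {(i,j). i < m \<and> j < m \<and> i \<noteq> j}" by (rule finite_subset) simp
    then show ?thesis unfolding D_def by simp
  qed
  define \<delta> where "\<delta> = Min (insert 1 D)"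
  have \<delta>pos: "0 < \<delta>"
    unfolding \<delta>_def using finD neq by (auto simp: Min_gr_iff D_def)
  have gap: "\<delta> \<le> \<bar>lam a - lam b\<bar>" if "a < m" "b < m" "a \<noteq> b" for a b
  proof -
    have "\<bar>lam a - lam b\<bar> \<in> insert 1 D" using that unfolding D_def by auto
    then show ?thesis unfolding \<delta>_def using finD by (intro Min_le) auto
  qed
  define S where "S = (\<Sum>i<m. \<bar>lam i\<bar>)"
  have Sb: "\<bar>lam i\<bar> \<le> S" if "i < m" for i
    unfolding S_def using that by (intro member_le_sum) auto
  define B where "B = 2 * S + 2"
  have B1: "1 \<le> B" using Sb[of 0] S_def unfolding B_def by (simp add: sum_nonneg)
  define K where "K = fact m * (real m * B ^ m)"
  have K0: "0 \<le> K" unfolding K_def using B1 by simp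
  define r where "r = min (\<delta> / 4) (min 1 (\<epsilon> / (2 * (real m + 1))))"
  have r0: "0 < r" unfolding r_def using \<delta>pos eps by simp
  have r1: "r \<le> \<delta> / 4" "r \<le> 1" "r \<le> \<epsilon> / (2 * (real m + 1))" unfolding r_def
    by (meson min.cobounded1 min.cobounded2 order_trans)+
  define c where "c = r * (\<delta> / 2) ^ (m - 1)"
  have c0: "0 < c" unfolding c_def using r0 \<delta>pos by simp
  define t where "t = min r (min (\<delta> / (8 * (real m + 1))) (c / (2 * (K + 1))))"
  have t0: "0 < t" unfolding t_def using r0 \<delta>pos c0 K0 by simp
  have t1: "t \<le> r" "t \<le> \<delta> / (8 * (real m + 1))" "t \<le> c / (2 * (K + 1))" unfolding t_def
    by (meson min.cobounded1 min.cobounded2 order_trans)+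
  have tle1: "t \<le> 1" using t1 r1 by simp
  have Kt: "K * t < c"
  proof -
    have "t * (2 * (K + 1)) \<le> c" using t1(3) K0 by (simp add: le_divide_eq)
    then have "(K + 1) * t \<le> c / 2" by (simp add: algebra_simps)
    moreover have "K * t \<le> (K + 1) * t" using t0 by simp
    ultimately show ?thesis using c0 by simp
  qed
  have Nb: "0 \<le> Nm E f t i j \<and> Nm E f t i j \<le> t" for i j
    by (rule Nm_bound[OF t0 tle1 fpos])
  define cube where "cube x \<longleftrightarrow> (\<forall>j<m. 0 \<le> x j \<and> x j \<le> (1::real))" for x
  define dd where "dd x j = lam j + r * (2 * x j - 1)" for x :: "nat \<Rightarrow> real" and j
  have ddb: "\<bar>dd x j - lam j\<bar> \<le> r" if "cube x" "j < m" for x j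
  proof -
    have "-1 \<le> 2 * x j - 1" "2 * x j - 1 \<le> 1" using that unfolding cube_def by auto
    then have "r * (-1) \<le> r * (2 * x j - 1)" "r * (2 * x j - 1) \<le> r * 1"
      using r0 by (intro mult_left_mono; simp)+
    then show ?thesis unfolding dd_def by simp
  qed
  define P where "P i = (\<Prod>a\<in>{..<m} - {i}. lam i - lam a)" for i
  have Pnz: "P i \<noteq> 0" if "i < m" for i
    unfolding P_def using neq that by (auto simp: prod_zero_iff)
  define Mx where "Mx i x = Matrix.mat m m (\<lambda>(a,b). if a = b then lam i - dd x a else - Nm E f t a b)" for i x
  define h where "h i x = P i * det (Mx i x)" for i x
  have hsplit: "\<exists>Err. \<bar>Err\<bar> \<le> K * t \<and>
      h i x = (lam i - dd x i) * (P i * (\<Prod>a\<in>{..<m} - {i}. lam i - dd x a)) + P i * Err"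
    if i: "i < m" and x: "cube x" for i x
  proof -
    have cb: "\<bar>lam i - dd x a\<bar> \<le> B" if "a < m" for a
    proof -
      have "\<bar>lam i - dd x a\<bar> \<le> \<bar>lam i\<bar> + \<bar>lam a\<bar> + \<bar>dd x a - lam a\<bar>" by linarith
      also have "\<dots> \<le> S + S + 1" using Sb[OF i] Sb[OF that] ddb[OF x that] r1 by linarith
      finally show ?thesis unfolding B_def by simp
    qed
    have "\<bar>det (Mx i x) - (\<Prod>a<m. lam i - dd x a)\<bar> \<le> fact m * (real m * B ^ m * t)"
      unfolding Mx_def by (rule det_perturb[OF B1 cb _ Nb]) (use tle1 B1 in auto)
    then have e: "\<bar>det (Mx i x) - (\<Prod>a<m. lam i - dd x a)\<bar> \<le> K * t"
      unfolding K_def by (simp add: algebra_simps)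
    have pr: "(\<Prod>a<m. lam i - dd x a) = (lam i - dd x i) * (\<Prod>a\<in>{..<m} - {i}. lam i - dd x a)"
      using i by (subst prod.remove[of "{..<m}" i]) auto
    show ?thesis
      by (rule exI[of _ "det (Mx i x) - (\<Prod>a<m. lam i - dd x a)"]) (use e in \<open>simp add: h_def pr algebra_simps\<close>)
  qed
  have Qb: "\<bar>P i\<bar> * (\<delta> / 2) ^ (m - 1) \<le> P i * (\<Prod>a\<in>{..<m} - {i}. lam i - dd x a)"
    if i: "i < m" and x: "cube x" for i x
    unfolding P_def
  proof (rule face_prod_bound[OF i gap _ \<delta>pos])
    fix a assume "a < m"
    then show "\<bar>dd x a - lam a\<bar> \<le> \<delta> / 2" using ddb[OF x] r1 \<delta>pos by fastforce
  qed auto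
  have hpos: "h i x > 0" if i: "i < m" and x: "cube x" and xi: "x i = 0" for i x
  proof -
    obtain Err where Err: "\<bar>Err\<bar> \<le> K * t"
      and hx: "h i x = (lam i - dd x i) * (P i * (\<Prod>a\<in>{..<m} - {i}. lam i - dd x a)) + P i * Err"
      using hsplit[OF i x] by blast
    have li: "lam i - dd x i = r" using xi by (simp add: dd_def)
    have Pp: "0 < \<bar>P i\<bar>" using Pnz[OF i] by simp
    have "\<bar>P i * Err\<bar> \<le> \<bar>P i\<bar> * (K * t)" unfolding abs_mult using Err by (rule mult_left_mono) simp
    moreover have "r * (\<bar>P i\<bar> * (\<delta> / 2) ^ (m - 1)) \<le> r * (P i * (\<Prod>a\<in>{..<m} - {i}. lam i - dd x a))"
      using Qb[OF i x] r0 by (intro mult_left_mono) auto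
    moreover have "r * (\<bar>P i\<bar> * (\<delta> / 2) ^ (m - 1)) = \<bar>P i\<bar> * c" unfolding c_def by simp
    moreover have "\<bar>P i\<bar> * (K * t) < \<bar>P i\<bar> * c" using Kt Pp by simp
    ultimately show ?thesis unfolding hx li by linarith
  qed
  have hneg: "h i x < 0" if i: "i < m" and x: "cube x" and xi: "x i = 1" for i x
  proof -
    obtain Err where Err: "\<bar>Err\<bar> \<le> K * t"
      and hx: "h i x = (lam i - dd x i) * (P i * (\<Prod>a\<in>{..<m} - {i}. lam i - dd x a)) + P i * Err"
      using hsplit[OF i x] by blast
    have li: "lam i - dd x i = - r" using xi by (simp add: dd_def)
    have Pp: "0 < \<bar>P i\<bar>" using Pnz[OF i] by simp
    have "\<bar>P i * Err\<bar> \<le> \<bar>P i\<bar> * (K * t)" unfolding abs_mult using Err by (rule mult_left_mono) simp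
    moreover have "r * (\<bar>P i\<bar> * (\<delta> / 2) ^ (m - 1)) \<le> r * (P i * (\<Prod>a\<in>{..<m} - {i}. lam i - dd x a))"
      using Qb[OF i x] r0 by (intro mult_left_mono) auto
    moreover have "r * (\<bar>P i\<bar> * (\<delta> / 2) ^ (m - 1)) = \<bar>P i\<bar> * c" unfolding c_def by simp
    moreover have "\<bar>P i\<bar> * (K * t) < \<bar>P i\<bar> * c" using Kt Pp by simp
    ultimately show ?thesis unfolding hx li by linarith
  qed
  have hcont: "(\<lambda>k. h i (X k)) \<longlonglongrightarrow> h i L"
    if i: "i < m" and X: "\<And>j. j < m \<Longrightarrow> (\<lambda>k. X k j) \<longlonglongrightarrow> L j" for i X L
  proof -
    have "(\<lambda>k. det (Mx i (X k))) \<longlonglongrightarrow> det (Mx i L)"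
      unfolding Mx_def
    proof (rule det_tendsto)
      fix a b assume ab: "a < m" "b < m"
      show "(\<lambda>k. if a = b then lam i - dd (X k) a else - Nm E f t a b) \<longlonglongrightarrow>
            (if a = b then lam i - dd L a else - Nm E f t a b)"
        unfolding dd_def using X[OF ab(1)] by (auto intro!: tendsto_intros)
    qed
    then show ?thesis unfolding h_def by (rule tendsto_mult_left)
  qed
  obtain x where xc: "\<forall>j<m. 0 \<le> x j \<and> x j \<le> 1" and hz: "\<forall>i<m. h i x = 0"
    using poincare_miranda[of m h] hcont hpos hneg unfolding cube_def by blast
  have x: "cube x" using xc unfolding cube_def by blast
  define d where "d = dd x"
  define A where "A = Am m E f t d"
  have detz: "det (Mx i x) = 0" if "i < m" for i
    using hz Pnz[OF that] that unfolding h_def by auto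
  have Ac: "A \<in> carrier_mat m m" unfolding A_def by simp
  have Asym: "real_symmetric A"
    unfolding real_symmetric_def A_def
    by (rule eq_matI) (auto simp: Am_def Nm_sym)
  have inE: "A \<in> E_Lambda m lam"
  proof -
    have "char_poly A = (\<Prod>i<m. [:- lam i, 1:])"
    proof (rule monic_roots_eq)
      show "degree (char_poly A) = m" "coeff (char_poly A) m = 1"
        using degree_monic_char_poly[OF Ac] by auto
      show "inj_on lam {..<m}" using neq by (auto simp: inj_on_def)
      fix k assume k: "k < m"
      show "poly (char_poly A) (lam k) = 0"
        unfolding A_def d_def char_poly_Am using detz[OF k] by (simp add: Mx_def)
    qed
    then show ?thesis using Ac Asym unfolding E_Lambda_def by auto
  qed
  have edge: "i \<noteq> j" if "{i, j} \<in> E" for i j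
  proof -
    from graph that obtain a b where "a \<noteq> b" "{i, j} = {a, b}" unfolding simple_graph_def by blast
    then show ?thesis by (metis doubleton_eq_iff)
  qed
  have inM: "A \<in> M_fG m E f t"
    unfolding M_fG_def S_graph_def
  proof (intro CollectI conjI allI impI Ac Asym)
    fix i j assume ij: "i < m" "j < m" "i \<noteq> j"
    show "A $$ (i, j) \<noteq> 0 \<longleftrightarrow> {i, j} \<in> E"
      using ij t0 by (auto simp: A_def Am_index Nm_def)
  next
    fix i j assume ij: "i < m" "j < m" "{i, j} \<in> E"
    then show "A $$ (i, j) = t ^ f {i, j}" using edge[OF ij(3)] by (auto simp: A_def Am_index Nm_def)
  qed
  have dgap: "\<delta> / 2 \<le> \<bar>d a - d b\<bar>" if "a < m" "b < m" "a \<noteq> b" for a b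
  proof -
    have "\<delta> \<le> \<bar>lam a - lam b\<bar>" using gap that by blast
    moreover have "\<bar>d a - lam a\<bar> \<le> r" "\<bar>d b - lam b\<bar> \<le> r" unfolding d_def using ddb[OF x] that by auto
    ultimately show ?thesis using r1 by linarith
  qed
  have mt: "2 * real m * t < \<delta> / 2"
  proof -
    have "t * (8 * (real m + 1)) \<le> \<delta>" using t1(2) by (simp add: le_divide_eq)
    moreover have "2 * real m * t * 4 \<le> t * (8 * (real m + 1))" using t0 by (simp add: algebra_simps)
    ultimately show ?thesis using \<delta>pos by linarith
  qed
  have ssp: "SSP A"
    unfolding SSP_def
  proof (intro allI impI)
    fix X assume asm: "X \<in> carrier_mat (dim_row A) (dim_row A) \<and> real_symmetric X \<and> A * X = X * A \<and>
      (\<forall>i<dim_row A. \<forall>j<dim_row A. A $$ (i, j) * X $$ (i, j) = 0) \<and> (\<forall>i<dim_row A. X $$ (i, i) = 0)"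
    have dA: "dim_row A = m" using Ac by simp
    have Xc: "X \<in> carrier_mat m m" and AX: "A * X = X * A" and X0: "\<And>i. i < m \<Longrightarrow> X $$ (i, i) = 0"
      using asm dA by auto
    show "X = 0\<^sub>m (dim_row A) (dim_row A)"
    proof (rule ccontr)
      assume "X \<noteq> 0\<^sub>m (dim_row A) (dim_row A)"
      then obtain a0 b0 where ab0: "a0 < m" "b0 < m" "X $$ (a0, b0) \<noteq> 0"
        using Xc dA by (metis (no_types, lifting) carrier_matD eq_matI index_zero_mat(1,2,3))
      define U where "U = (\<lambda>(a,b). \<bar>X $$ (a,b)\<bar>) ` ({..<m} \<times> {..<m})"
      define \<mu> where "\<mu> = Max U"
      have finU: "finite U" and neU: "U \<noteq> {}" unfolding U_def using ab0 by auto
      have mub: "\<bar>X $$ (a, b)\<bar> \<le> \<mu>" if "a < m" "b < m" for a b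
        unfolding \<mu>_def using finU that by (intro Max_ge) (auto simp: U_def)
      have "\<mu> \<in> U" unfolding \<mu>_def using finU neU by (rule Max_in)
      then obtain a b where ab: "a < m" "b < m" "\<mu> = \<bar>X $$ (a, b)\<bar>" unfolding U_def by auto
      have mupos: "0 < \<mu>" using mub[OF ab0(1,2)] ab0(3) by linarith
      have anb: "a \<noteq> b" using X0 ab mupos by auto
      have AXe: "(A * X) $$ (a, b) = d a * X $$ (a, b) + (\<Sum>l<m. Nm E f t a l * X $$ (l, b))"
      proof -
        have "(A * X) $$ (a, b) = (\<Sum>l<m. A $$ (a, l) * X $$ (l, b))"
          using Ac Xc ab by (simp add: scalar_prod_def atLeast0LessThan)
        also have "\<dots> = (\<Sum>l<m. (if a = l then d a * X $$ (l, b) else 0) + Nm E f t a l * X $$ (l, b))"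
          by (rule sum.cong) (auto simp: A_def Am_index ab)
        also have "\<dots> = d a * X $$ (a, b) + (\<Sum>l<m. Nm E f t a l * X $$ (l, b))"
          using ab by (simp add: sum.distrib)
        finally show ?thesis .
      qed
      have XAe: "(X * A) $$ (a, b) = X $$ (a, b) * d b + (\<Sum>l<m. X $$ (a, l) * Nm E f t l b)"
      proof -
        have "(X * A) $$ (a, b) = (\<Sum>l<m. X $$ (a, l) * A $$ (l, b))"
          using Ac Xc ab by (simp add: scalar_prod_def atLeast0LessThan)
        also have "\<dots> = (\<Sum>l<m. (if l = b then X $$ (a, l) * d b else 0) + X $$ (a, l) * Nm E f t l b)"
          by (rule sum.cong) (auto simp: A_def Am_index ab)
        also have "\<dots> = X $$ (a, b) * d b + (\<Sum>l<m. X $$ (a, l) * Nm E f t l b)"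
          using ab by (simp add: sum.distrib)
        finally show ?thesis .
      qed
      have s1: "\<bar>\<Sum>l<m. Nm E f t a l * X $$ (l, b)\<bar> \<le> real m * (t * \<mu>)"
      proof -
        have "\<bar>\<Sum>l<m. Nm E f t a l * X $$ (l, b)\<bar> \<le> (\<Sum>l<m. \<bar>Nm E f t a l * X $$ (l, b)\<bar>)" by (rule sum_abs)
        also have "\<dots> \<le> (\<Sum>l<m. t * \<mu>)"
        proof (rule sum_mono)
          fix l assume l: "l \<in> {..<m}"
          show "\<bar>Nm E f t a l * X $$ (l, b)\<bar> \<le> t * \<mu>"
            unfolding abs_mult using Nb[of a l] mub[of l b] l ab t0
            by (intro mult_mono) auto
        qed
        finally show ?thesis by simp
      qed
      have s2: "\<bar>\<Sum>l<m. X $$ (a, l) * Nm E f t l b\<bar> \<le> real m * (t * \<mu>)"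
      proof -
        have "\<bar>\<Sum>l<m. X $$ (a, l) * Nm E f t l b\<bar> \<le> (\<Sum>l<m. \<bar>X $$ (a, l) * Nm E f t l b\<bar>)" by (rule sum_abs)
        also have "\<dots> \<le> (\<Sum>l<m. t * \<mu>)"
        proof (rule sum_mono)
          fix l assume l: "l \<in> {..<m}"
          show "\<bar>X $$ (a, l) * Nm E f t l b\<bar> \<le> t * \<mu>"
            unfolding abs_mult using Nb[of l b] mub[of a l] l ab t0
            by (subst mult.commute, intro mult_mono) auto
        qed
        finally show ?thesis by simp
      qed
      have "(d a - d b) * X $$ (a, b) = (\<Sum>l<m. X $$ (a, l) * Nm E f t l b) - (\<Sum>l<m. Nm E f t a l * X $$ (l, b))"
        using AX AXe XAe by (simp add: algebra_simps)
      then have "\<bar>d a - d b\<bar> * \<mu> \<le> 2 * real m * t * \<mu>"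
        using s1 s2 ab(3) by (simp add: abs_mult)
      moreover have "\<delta> / 2 * \<mu> \<le> \<bar>d a - d b\<bar> * \<mu>"
        using dgap[OF ab(1,2) anb] mupos by (intro mult_right_mono) auto
      moreover have "2 * real m * t * \<mu> < \<delta> / 2 * \<mu>"
        using mt mupos by (intro mult_strict_right_mono) auto
      ultimately show False by linarith
    qed
  qed
  have fr: "frob_norm (A - diag_of m lam) < \<epsilon>"
  proof -
    have dims: "dim_row (A - diag_of m lam) = m" "dim_col (A - diag_of m lam) = m"
      using Ac by (auto simp: diag_of_def)
    have ent: "((A - diag_of m lam) $$ (i, j))\<^sup>2 \<le> r\<^sup>2" if "i < m" "j < m" for i j
    proof -
      have "\<bar>(A - diag_of m lam) $$ (i, j)\<bar> \<le> r"
      proof (cases "i = j")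
        case True
        then show ?thesis using that ddb[OF x] Ac
          by (auto simp: diag_of_def A_def Am_index d_def)
      next
        case False
        then show ?thesis using that Nb[of i j] t1 Ac
          by (auto simp: diag_of_def A_def Am_index)
      qed
      then show ?thesis by (metis abs_ge_zero abs_le_square_iff abs_of_nonneg order_trans power2_abs r0 less_imp_le)
    qed
    have "(\<Sum>i<m. \<Sum>j<m. ((A - diag_of m lam) $$ (i, j))\<^sup>2) \<le> (\<Sum>i<m. \<Sum>j<m. r\<^sup>2)"
      using ent by (intro sum_mono) auto
    also have "\<dots> = (real m * r)\<^sup>2" by (simp add: power2_eq_square)
    finally have "frob_norm (A - diag_of m lam) \<le> sqrt ((real m * r)\<^sup>2)"
      unfolding frob_norm_def dims by (rule real_sqrt_le_mono)
    also have "\<dots> = real m * r" using r0 by simp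
    also have "\<dots> < \<epsilon>"
    proof -
      have "r * (2 * (real m + 1)) \<le> \<epsilon>" using r1(3) by (simp add: le_divide_eq)
      moreover have "real m * r * 2 \<le> r * (2 * (real m + 1))" using r0 by (simp add: algebra_simps)
      ultimately show ?thesis using eps by linarith
    qed
    finally show ?thesis .
  qed
  show ?thesis using t0 inM inE ssp fr by blast
qed

end
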